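(* Let $N\ge 2$ and let $p$ be odd with $3\le p\le 2N-1$. Let $\Lambda=\Lambda^\bullet(\mathbb{C}^{N\times N})$ be the exterior algebra on the $N^2$ odd generators $\Psi_{ij}$, $V_R=\Lambda^R$, and $q:=\mathrm{Tr}(\Psi^p)=\sum_{i_1,\dots,i_p=1}^N\Psi_{i_1i_2}\Psi_{i_2i_3}\cdots\Psi_{i_pi_1}\in\Lambda^p$. Let $Q_R:V_R\to V_{R+p}$, $Q_R(a)=q\wedge a$, and let $\langle a,b\rangle$ denote the coefficient of the top-degree component $[a\wedge b]_{\Lambda^{N^2}}$ (with respect to a fixed generator of $\Lambda^{N^2}$). Then for all $a\in V_R$ and $b\in V_{N^2-p-R}$, \[ \langle Q_Ra,\,b\rangle=(-1)^{pR}\langle a,\,Q_{N^2-p-R}\,b\rangle. \] Consequently $r_R=r_{N^2-p-R}$ for all $R$, where $r_R:=\operatorname{rank}Q_R$, and the rank polynomial $\mathcal R_{p,N}(x)=\sum_R r_Rx^R$ is palindromic of degree $N^2-p$.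
   Context: Here $r_R:=0$ when $R<0$ or $R>N^2-p$. The product $\Psi_{i_1i_2}\cdots\Psi_{i_pi_1}$ is the wedge product in $\Lambda$. *)

theory Defs
  imports Complex_Main "HOL-Library.Function_Algebras" "HOL-Computational_Algebra.Polynomial" "HOL-Library.FuncSet"
begin

text \<open>An element is represented by
its coefficient function on finite sets of generators (the basis monomial of a set S is the
wedge of its elements in lexicographic order).\<close>

type_synonym ext = "(nat \<times> nat) set \<Rightarrow> complex"

definition gens :: "nat \<Rightarrow> (nat \<times> nat) set" where
  "gens N = {0..<N} \<times> {0..<N}"

definition lexless :: "nat \<times> nat \<Rightarrow> nat \<times> nat \<Rightarrow> bool" where
  "lexless x y \<longleftrightarrow> fst x < fst y \<or> (fst x = fst y \<and> snd x < snd y)"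

definition wsign :: "(nat \<times> nat) set \<Rightarrow> (nat \<times> nat) set \<Rightarrow> complex" where
  "wsign S T = (-1) ^ card {(s, t). s \<in> S \<and> t \<in> T \<and> lexless t s}"

definition wedge :: "ext \<Rightarrow> ext \<Rightarrow> ext" where
  "wedge a b = (\<lambda>U. if finite U then (\<Sum>S\<in>Pow U. wsign S (U - S) * a S * b (U - S)) else 0)"

definition ext_one :: ext where
  "ext_one = (\<lambda>S. if S = {} then 1 else 0)"

definition Psi :: "nat \<Rightarrow> nat \<Rightarrow> ext" where
  "Psi i j = (\<lambda>S. if S = {(i, j)} then 1 else 0)"

definition hom :: "nat \<Rightarrow> nat \<Rightarrow> ext set" where
  "hom N R = {a. \<forall>S. a S \<noteq> 0 \<longrightarrow> S \<subseteq> gens N \<and> card S = R}"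

definition qTr :: "nat \<Rightarrow> nat \<Rightarrow> ext" where
  "qTr N p = (\<lambda>U. \<Sum>i\<in>PiE {0..<p} (\<lambda>_. {0..<N}).
       foldr wedge (map (\<lambda>k. Psi (i k) (i (Suc k mod p))) [0..<p]) ext_one U)"

definition Qmap :: "nat \<Rightarrow> nat \<Rightarrow> ext \<Rightarrow> ext" where
  "Qmap N p a = wedge (qTr N p) a"

definition pairing :: "nat \<Rightarrow> ext \<Rightarrow> ext \<Rightarrow> complex" where
  "pairing N a b = wedge a b (gens N)"

definition cscale :: "complex \<Rightarrow> ext \<Rightarrow> ext" where
  "cscale c f = (\<lambda>S. c * f S)"

definition rk :: "nat \<Rightarrow> nat \<Rightarrow> int \<Rightarrow> nat" where
  "rk N p R = (if R < 0 \<or> R > int (N^2) - int p then 0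
               else vector_space.dim cscale (Qmap N p ` hom N (nat R)))"

definition rank_poly :: "nat \<Rightarrow> nat \<Rightarrow> int poly" where
  "rank_poly N p = (\<Sum>R\<le>N^2 - p. monom (int (rk N p (int R))) R)"

end

theory Submission imports Defs begin
interpretation V: vector_space cscale
  by unfold_locales (auto simp: cscale_def fun_eq_iff algebra_simps)

lemma inv_fin: "finite S \<Longrightarrow> finite T \<Longrightarrow> finite {(s, t). s \<in> S \<and> t \<in> T \<and> lexless t s}"
  by (rule finite_subset[of _ "S \<times> T"]) auto

lemma wsign_union_left:
  assumes "A \<inter> B = {}" "finite A" "finite B" "finite C"
  shows "wsign (A \<union> B) C = wsign A C * wsign B C"
proof -
  have e: "{(s, t). s \<in> A \<union> B \<and> t \<in> C \<and> lexless t s} =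
     {(s, t). s \<in> A \<and> t \<in> C \<and> lexless t s} \<union> {(s, t). s \<in> B \<and> t \<in> C \<and> lexless t s}" by auto
  show ?thesis unfolding wsign_def e
    by (subst card_Un_disjoint) (use assms inv_fin in \<open>auto simp: power_add\<close>)
qed

lemma wsign_union_right:
  assumes "B \<inter> C = {}" "finite A" "finite B" "finite C"
  shows "wsign A (B \<union> C) = wsign A B * wsign A C"
proof -
  have e: "{(s, t). s \<in> A \<and> t \<in> B \<union> C \<and> lexless t s} =
     {(s, t). s \<in> A \<and> t \<in> B \<and> lexless t s} \<union> {(s, t). s \<in> A \<and> t \<in> C \<and> lexless t s}" by auto
  show ?thesis unfolding wsign_def e
    by (subst card_Un_disjoint) (use assms inv_fin in \<open>auto simp: power_add\<close>)
qed

lemma wsign_sq: "wsign S T * wsign S T = 1"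
  unfolding wsign_def by (simp flip: power_add)

lemma wsign_swap:
  assumes "S \<inter> T = {}" "finite S" "finite T"
  shows "wsign S T * wsign T S = (-1) ^ (card S * card T)"
proof -
  let ?X = "{(s, t). s \<in> S \<and> t \<in> T \<and> lexless t s}"
  let ?Y = "{(s, t). s \<in> T \<and> t \<in> S \<and> lexless t s}"
  let ?Y' = "{(s, t). s \<in> S \<and> t \<in> T \<and> lexless s t}"
  have cY: "card ?Y = card ?Y'"
    by (rule bij_betw_same_card[of "\<lambda>(a,b). (b,a)"]) (auto simp: bij_betw_def inj_on_def image_def)
  have u: "?X \<union> ?Y' = S \<times> T"
  proof -
    have "lexless t s \<or> lexless s t" if "s \<in> S" "t \<in> T" for s t
      using that assms(1) unfolding lexless_def by (cases s; cases t) auto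
    then show ?thesis by auto
  qed
  have d: "?X \<inter> ?Y' = {}" unfolding lexless_def by auto
  have f: "finite ?Y'" by (rule finite_subset[of _ "S \<times> T"]) (use assms in auto)
  have "card ?X + card ?Y' = card S * card T"
    using card_Un_disjoint[of ?X ?Y'] u d assms inv_fin[of S T] f
    by (simp add: card_cartesian_product)
  then show ?thesis unfolding wsign_def cY by (simp flip: power_add)
qed

lemma wedge_fin: "finite U \<Longrightarrow> wedge a b U = (\<Sum>S\<in>Pow U. wsign S (U - S) * a S * b (U - S))"
  by (simp add: wedge_def)

lemma wedge_inf: "infinite U \<Longrightarrow> wedge a b U = 0"
  by (simp add: wedge_def)

lemma wedge_assoc: "wedge (wedge a b) c = wedge a (wedge b c)"
proof (rule ext)
  fix U :: "(nat \<times> nat) set"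
  show "wedge (wedge a b) c U = wedge a (wedge b c) U"
  proof (cases "finite U")
    case False then show ?thesis by (simp add: wedge_inf)
  next
    case fin: True
    have "wedge (wedge a b) c U = (\<Sum>S\<in>Pow U. \<Sum>T\<in>Pow S.
        wsign S (U - S) * wsign T (S - T) * a T * b (S - T) * c (U - S))"
      unfolding wedge_fin[OF fin]
      by (rule sum.cong[OF refl]) (auto simp: wedge_fin finite_subset[OF _ fin] sum_distrib_left sum_distrib_right mult.assoc)
    also have "\<dots> = (\<Sum>(S,T)\<in>Sigma (Pow U) Pow.
        wsign S (U - S) * wsign T (S - T) * a T * b (S - T) * c (U - S))"
      by (rule sum.Sigma) (use fin finite_subset in auto)
    also have "\<dots> = (\<Sum>(T,X)\<in>Sigma (Pow U) (\<lambda>T. Pow (U - T)).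
        wsign T (U - T) * a T * (wsign X (U - T - X) * b X * c (U - T - X)))"
    proof (rule sum.reindex_bij_witness[of _ "\<lambda>(T,X). (T \<union> X, T)" "\<lambda>(S,T). (T, S - T)"])
      fix st assume "st \<in> Sigma (Pow U) Pow"
      then obtain S T where st: "st = (S,T)" "T \<subseteq> S" "S \<subseteq> U" by auto
      have fS: "finite S" "finite T" using st fin finite_subset by (meson, meson dual_order.trans)
      have e1: "U - T - (S - T) = U - S" using st by auto
      have e2: "S = T \<union> (S - T)" using st by auto
      have e3: "U - T = (S - T) \<union> (U - S)" using st by auto
      have "wsign S (U - S) = wsign T (U - S) * wsign (S - T) (U - S)"
        by (subst e2, rule wsign_union_left) (use fS fin in auto)
      moreover have "wsign T (U - T) = wsign T (S - T) * wsign T (U - S)"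
        by (subst e3, rule wsign_union_right) (use fS fin in auto)
      ultimately show "(case (\<lambda>(S,T). (T, S - T)) st of (T, X) \<Rightarrow>
        wsign T (U - T) * a T * (wsign X (U - T - X) * b X * c (U - T - X))) =
        (case st of (S, T) \<Rightarrow> wsign S (U - S) * wsign T (S - T) * a T * b (S - T) * c (U - S))"
        using st e1 by (simp add: mult_ac)
    qed auto
    also have "\<dots> = (\<Sum>T\<in>Pow U. \<Sum>X\<in>Pow (U - T).
        wsign T (U - T) * a T * (wsign X (U - T - X) * b X * c (U - T - X)))"
      by (rule sum.Sigma[symmetric]) (use fin in auto)
    also have "\<dots> = wedge a (wedge b c) U"
      unfolding wedge_fin[OF fin]
      by (rule sum.cong[OF refl]) (auto simp: wedge_fin fin sum_distrib_left)
    finally show ?thesis .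
  qed
qed

lemma wedge_add_left: "wedge (x + y) b = wedge x b + wedge y b"
  by (auto simp: wedge_def fun_eq_iff sum.distrib algebra_simps)

lemma wedge_scale_left: "wedge (cscale c x) b = cscale c (wedge x b)"
  by (auto simp: wedge_def fun_eq_iff cscale_def sum_distrib_left algebra_simps)

lemma wedge_add_right: "wedge b (x + y) = wedge b x + wedge b y"
  by (auto simp: wedge_def fun_eq_iff sum.distrib algebra_simps)

lemma wedge_scale_right: "wedge b (cscale c x) = cscale c (wedge b x)"
  by (auto simp: wedge_def fun_eq_iff cscale_def sum_distrib_left algebra_simps)

lemma homD: "a \<in> hom N r \<Longrightarrow> a S \<noteq> 0 \<Longrightarrow> S \<subseteq> gens N \<and> card S = r"
  by (auto simp: hom_def)

lemma finite_gens[simp]: "finite (gens N)" by (simp add: gens_def)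
lemma card_gens[simp]: "card (gens N) = N^2" by (simp add: gens_def power2_eq_square)

lemma wedge_comm:
  assumes a: "a \<in> hom N r" and b: "b \<in> hom N s"
  shows "wedge a b = cscale ((-1) ^ (r * s)) (wedge b a)"
proof (rule ext)
  fix U :: "(nat \<times> nat) set"
  show "wedge a b U = cscale ((-1) ^ (r * s)) (wedge b a) U"
  proof (cases "finite U")
    case False then show ?thesis by (simp add: wedge_inf cscale_def)
  next
    case fin: True
    have "wedge b a U = (\<Sum>S\<in>Pow U. wsign (U - S) (U - (U - S)) * b (U - S) * a (U - (U - S)))"
      unfolding wedge_fin[OF fin]
      by (rule sum.reindex_bij_witness[of _ "\<lambda>S. U - S" "\<lambda>S. U - S"]) (auto simp: double_diff)
    also have "\<dots> = (\<Sum>S\<in>Pow U. wsign (U - S) S * b (U - S) * a S)"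
      by (rule sum.cong[OF refl]) (auto simp: Diff_Diff_Int Int_absorb1)
    finally have wb: "wedge b a U = \<dots>" .
    have "wsign S (U - S) * a S * b (U - S) = (-1) ^ (r * s) * (wsign (U - S) S * b (U - S) * a S)"
      if "S \<subseteq> U" for S
    proof (cases "a S = 0 \<or> b (U - S) = 0")
      case True then show ?thesis by auto
    next
      case False
      then have c: "card S = r" "card (U - S) = s" using homD[OF a] homD[OF b] by auto
      have fS: "finite S" using that fin finite_subset by auto
      have sw: "wsign S (U - S) * wsign (U - S) S = (-1) ^ (r * s)"
        using wsign_swap[of S "U - S"] fS fin c by auto
      have "wsign S (U - S) = (-1) ^ (r * s) * wsign (U - S) S"
        using arg_cong[OF sw, of "\<lambda>z. z * wsign (U - S) S"] wsign_sq[of "U - S" S]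
        by (simp add: mult.assoc)
      then show ?thesis by (simp add: mult_ac)
    qed
    then have "wedge a b U = (-1) ^ (r * s) * wedge b a U"
      apply (subst wb)
      apply (subst wedge_fin[OF fin])
      unfolding sum_distrib_left by (intro sum.cong) auto
    then show ?thesis by (simp add: cscale_def)
  qed
qed

primrec invs :: "(nat \<times> nat) list \<Rightarrow> nat" where
  "invs [] = 0"
| "invs (e # es) = card {x \<in> set es. lexless x e} + invs es"

lemma wsign_single: "wsign {e} T = (-1) ^ card {x \<in> T. lexless x e}"
proof -
  have "card {(s, t). s \<in> {e} \<and> t \<in> T \<and> lexless t s} = card {x \<in> T. lexless x e}"
    by (rule bij_betw_same_card[of snd]) (auto simp: bij_betw_def inj_on_def image_def)
  then show ?thesis by (simp add: wsign_def)
qed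

lemma wedge_Psi: "wedge (Psi i j) X U =
   (if finite U \<and> (i,j) \<in> U then wsign {(i,j)} (U - {(i,j)}) * X (U - {(i,j)}) else 0)"
proof (cases "finite U")
  case True
  have "wedge (Psi i j) X U = (\<Sum>S\<in>Pow U. if S = {(i,j)} then wsign {(i,j)} (U - {(i,j)}) * X (U - {(i,j)}) else 0)"
    unfolding wedge_fin[OF True] by (rule sum.cong) (auto simp: Psi_def)
  also have "\<dots> = (if (i,j) \<in> U then wsign {(i,j)} (U - {(i,j)}) * X (U - {(i,j)}) else 0)"
    by (subst sum.delta'[where a = "{(i,j)}", simplified eq_commute]) (use True in auto)
  finally show ?thesis using True by simp
qed (simp add: wedge_inf)

lemma foldr_Psi: "foldr wedge (map (\<lambda>e. Psi (fst e) (snd e)) es) ext_one U =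
   (if distinct es \<and> set es = U then (-1) ^ invs es else 0)"
proof (induction es arbitrary: U)
  case Nil then show ?case by (auto simp: ext_one_def)
next
  case (Cons e es)
  obtain i j where e: "e = (i,j)" by force
  have iff: "(distinct (e # es) \<and> set (e # es) = U) \<longleftrightarrow>
      (finite U \<and> e \<in> U \<and> distinct es \<and> set es = U - {e})" by auto
  show ?case
  proof (cases "finite U \<and> e \<in> U \<and> distinct es \<and> set es = U - {e}")
    case True
    then have "set es = U - {e}" by auto
    then show ?thesis using True Cons.IH[of "U - {e}"] unfolding iff
      by (simp add: e wedge_Psi wsign_single power_add)
  next
    case False
    then show ?thesis using Cons.IH[of "U - {e}"] unfolding iff by (auto simp: e wedge_Psi)
  qed
qed

definition walk :: "nat \<Rightarrow> (nat \<Rightarrow> nat) \<Rightarrow> (nat \<times> nat) list" where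
  "walk p i = map (\<lambda>k. (i k, i (Suc k mod p))) [0..<p]"

lemma qTr_eq: "qTr N p U = (\<Sum>i\<in>PiE {0..<p} (\<lambda>_. {0..<N}).
   if distinct (walk p i) \<and> set (walk p i) = U then (-1) ^ invs (walk p i) else 0)"
proof -
  have "map (\<lambda>k. Psi (i k) (i (Suc k mod p))) [0..<p] =
        map (\<lambda>e. Psi (fst e) (snd e)) (walk p i)" for i
    by (simp add: walk_def)
  then show ?thesis unfolding qTr_def by (simp add: foldr_Psi)
qed

lemma qTr_hom: assumes "0 < p" shows "qTr N p \<in> hom N p"
  unfolding hom_def
proof (intro CollectI allI impI)
  fix U assume "qTr N p U \<noteq> 0"
  then obtain i where "i \<in> PiE {0..<p} (\<lambda>_. {0..<N})"
    "(if distinct (walk p i) \<and> set (walk p i) = U then (-1) ^ invs (walk p i) else 0) \<noteq> (0::complex)"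
    unfolding qTr_eq using sum.not_neutral_contains_not_neutral by blast
  then have i: "i \<in> PiE {0..<p} (\<lambda>_. {0..<N})" "distinct (walk p i)" "set (walk p i) = U"
    by (auto split: if_splits)
  have "card U = p" using i distinct_card[of "walk p i"] by (simp add: walk_def)
  moreover have "U \<subseteq> gens N"
  proof
    fix x assume "x \<in> U"
    then obtain k where k: "k < p" "x = (i k, i (Suc k mod p))" using i by (auto simp: walk_def)
    have "Suc k mod p < p" using assms by simp
    then show "x \<in> gens N" using i(1) k by (auto simp: gens_def PiE_iff)
  qed
  ultimately show "U \<subseteq> gens N \<and> card U = p" by simp
qed

lemma part1:
  assumes "0 < p" "a \<in> hom N R"
  shows "pairing N (Qmap N p a) b = (-1) ^ (p * R) * pairing N a (Qmap N p b)"
proof -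
  have "wedge (qTr N p) a = cscale ((-1) ^ (p * R)) (wedge a (qTr N p))"
    by (rule wedge_comm[OF qTr_hom[OF assms(1)] assms(2)])
  then show ?thesis
    unfolding pairing_def Qmap_def
    apply (subst (1) \<open>wedge (qTr N p) a = _\<close>)
    apply (subst wedge_scale_left)
    apply (subst wedge_assoc)
    apply (simp only: cscale_def)
    done
qed

lemma wedge_hom:
  assumes a: "a \<in> hom N r" and b: "b \<in> hom N s"
  shows "wedge a b \<in> hom N (r + s)"
  unfolding hom_def
proof (intro CollectI allI impI)
  fix U assume ne: "wedge a b U \<noteq> 0"
  then have fin: "finite U" by (metis wedge_inf)
  then obtain S where S: "S \<subseteq> U" "wsign S (U - S) * a S * b (U - S) \<noteq> 0"
    using ne sum.not_neutral_contains_not_neutral unfolding wedge_fin[OF fin] by blast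
  then have "a S \<noteq> 0" "b (U - S) \<noteq> 0" by auto
  then have h: "S \<subseteq> gens N" "card S = r" "U - S \<subseteq> gens N" "card (U - S) = s"
    using homD[OF a] homD[OF b] by auto
  have fS: "finite S" using S fin finite_subset by auto
  have "U = S \<union> (U - S)" using S by auto
  then have "card U = card S + card (U - S)"
    using card_Un_disjoint[of S "U - S"] fS fin by auto
  then show "U \<subseteq> gens N \<and> card U = r + s" using h S by auto
qed

lemma add_nz: "a + b \<noteq> (0::complex) \<Longrightarrow> a \<noteq> 0 \<or> b \<noteq> 0" by auto

lemma hom_subspace: "V.subspace (hom N r)"
  unfolding V.subspace_def hom_def by (auto simp: cscale_def dest!: add_nz)

lemma sum_apply_ext: "(\<Sum>i\<in>A. (f i :: ext)) x = (\<Sum>i\<in>A. f i x)"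
  by (induction A rule: infinite_finite_induct) auto

definition mono_e :: "(nat \<times> nat) set \<Rightarrow> ext" where
  "mono_e S = (\<lambda>T. if T = S then 1 else 0)"

lemma hom_span: "hom N r \<subseteq> V.span (mono_e ` Pow (gens N))"
proof
  fix x assume x: "x \<in> hom N r"
  have "x = (\<Sum>S\<in>Pow (gens N). cscale (x S) (mono_e S))"
  proof (rule ext)
    fix T
    show "x T = (\<Sum>S\<in>Pow (gens N). cscale (x S) (mono_e S)) T"
      unfolding sum_apply_ext cscale_def mono_e_def
    proof (cases "T \<subseteq> gens N")
      case True
      have "(\<Sum>S\<in>Pow (gens N). x S * (if T = S then 1 else 0)) = (\<Sum>S\<in>Pow (gens N). if T = S then x S else 0)"
        by (rule sum.cong) auto
      then show "x T = (\<Sum>S\<in>Pow (gens N). x S * (if T = S then 1 else 0))" using True by simp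
    next
      case False
      then have "x T = 0" using homD[OF x, of T] by auto
      moreover have "(\<Sum>S\<in>Pow (gens N). x S * (if T = S then 1 else 0)) = 0"
        by (rule sum.neutral) (use False in auto)
      ultimately show "x T = (\<Sum>S\<in>Pow (gens N). x S * (if T = S then 1 else 0))" by simp
    qed
  qed
  also have "\<dots> \<in> V.span (mono_e ` Pow (gens N))"
    by (intro V.span_sum V.span_scale V.span_base) auto
  finally show "x \<in> V.span (mono_e ` Pow (gens N))" .
qed

lemma nondeg:
  assumes x: "x \<in> hom N m" and m: "m \<le> N^2"
    and z: "\<forall>b\<in>hom N (N^2 - m). wedge x b (gens N) = 0"
  shows "x = 0"
proof (rule ccontr)
  assume "x \<noteq> 0"
  then obtain S where xS: "x S \<noteq> 0" by (auto simp: fun_eq_iff zero_fun_def)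
  then have S: "S \<subseteq> gens N" "card S = m" using homD[OF x] by auto
  define b where "b = mono_e (gens N - S)"
  have "card (gens N - S) = N^2 - m" using S by (simp add: card_Diff_subset finite_subset)
  then have bh: "b \<in> hom N (N^2 - m)" by (auto simp: b_def hom_def mono_e_def)
  have "wedge x b (gens N) = (\<Sum>T\<in>Pow (gens N). if T = S then wsign S (gens N - S) * x S else 0)"
    unfolding wedge_fin[OF finite_gens]
  proof (rule sum.cong[OF refl])
    fix T assume T: "T \<in> Pow (gens N)"
    have "(gens N - T = gens N - S) \<longleftrightarrow> T = S" using T S by auto
    then show "wsign T (gens N - T) * x T * b (gens N - T) =
      (if T = S then wsign S (gens N - S) * x S else 0)" by (auto simp: b_def mono_e_def)
  qed
  also have "\<dots> = wsign S (gens N - S) * x S" using S by (simp add: sum.delta)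
  also have "\<dots> \<noteq> 0" using xS by (simp add: wsign_def)
  finally show False using z bh by auto
qed

lemma Qmap_linear: "Vector_Spaces.linear cscale cscale (Qmap N p)"
  unfolding Vector_Spaces.linear_iff Qmap_def
  by (auto simp: wedge_add_right wedge_scale_right V.vector_space_axioms)

lemma pairing_add: "pairing N (x + y) b = pairing N x b + pairing N y b"
  by (simp add: pairing_def wedge_add_left)
lemma pairing_scale: "pairing N (cscale c x) b = c * pairing N x b"
  unfolding pairing_def wedge_scale_left by (simp add: cscale_def)
lemma pairing_add2: "pairing N b (x + y) = pairing N b x + pairing N b y"
  by (simp add: pairing_def wedge_add_right)
lemma pairing_scale2: "pairing N b (cscale c x) = c * pairing N b x"
  unfolding pairing_def wedge_scale_right by (simp add: cscale_def)

interpretation VP: vector_space_pair cscale cscale ..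

lemma pairing_zero2: "pairing N a 0 = 0"
  using pairing_scale2[of N a 0 0] by (simp add: cscale_def zero_fun_def)

lemma rank_le:
  assumes p: "0 < p" and RR: "R + p + R' = N^2"
  shows "V.dim (Qmap N p ` hom N R) \<le> V.dim (Qmap N p ` hom N R')"
proof -
  define W where "W = Qmap N p ` hom N R"
  define W' where "W' = Qmap N p ` hom N R'"
  have Wsub: "V.subspace W" "V.subspace W'"
    unfolding W_def W'_def
    using VP.linear_subspace_image[OF Qmap_linear hom_subspace] by auto
  have W'hom: "W' \<subseteq> hom N (p + R')"
    unfolding W'_def Qmap_def using wedge_hom qTr_hom[OF p] by blast
  have W'span: "W' \<subseteq> V.span (mono_e ` Pow (gens N))" using W'hom hom_span by blast
  obtain B where B: "B \<subseteq> W'" "V.independent B" "W' \<subseteq> V.span B" "card B = V.dim W'"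
    by (rule V.basis_exists)
  have finB: "finite B"
    using V.independent_span_bound[OF _ B(2), of "mono_e ` Pow (gens N)"] B(1) W'span by auto
  have "\<forall>c\<in>B. \<exists>b. b \<in> hom N R' \<and> Qmap N p b = c" using B(1) unfolding W'_def by auto
  then obtain bc where bc: "\<And>c. c \<in> B \<Longrightarrow> bc c \<in> hom N R' \<and> Qmap N p (bc c) = c"
    using bchoice[of B "\<lambda>c b. b \<in> hom N R' \<and> Qmap N p b = c"] by blast
  define L where "L x = (\<Sum>c\<in>B. cscale (pairing N x (bc c)) c)" for x
  have Llin: "Vector_Spaces.linear cscale cscale L"
    unfolding Vector_Spaces.linear_iff
  proof (intro conjI allI)
    show "vector_space cscale" by (rule V.vector_space_axioms)
    show "vector_space cscale" by (rule V.vector_space_axioms)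
    fix x y show "L (x + y) = L x + L y"
      unfolding L_def pairing_add V.scale_left_distrib sum.distrib ..
  next
    fix k x show "L (cscale k x) = cscale k (L x)"
      unfolding L_def pairing_scale V.scale_sum_right V.scale_scale ..
  qed
  obtain C where C: "C \<subseteq> W" "V.independent C" "W \<subseteq> V.span C" "card C = V.dim W"
    by (rule V.basis_exists)
  have spanC: "V.span C = W" using V.span_minimal[of C W] Wsub C by auto
  have kernel: "\<forall>x\<in>W. L x = 0 \<longrightarrow> x = 0"
  proof (intro ballI impI)
    fix x assume x: "x \<in> W" "L x = 0"
    then obtain a where a: "a \<in> hom N R" "x = Qmap N p a" unfolding W_def by auto
    have coef: "\<forall>c\<in>B. pairing N x (bc c) = 0"
      using V.dependent_finite[OF finB] B(2) x(2) unfolding L_def by auto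
    have pa: "pairing N a c = 0" if "c \<in> B" for c
    proof -
      have "pairing N x (bc c) = (-1) ^ (p * R) * pairing N a (Qmap N p (bc c))"
        unfolding a(2) by (rule part1[OF p a(1)])
      then show ?thesis using coef that bc[OF that] by simp
    qed
    have "V.span B \<subseteq> {y. pairing N a y = 0}"
    proof (rule V.span_minimal)
      show "B \<subseteq> {y. pairing N a y = 0}" using pa by auto
      show "V.subspace {y. pairing N a y = 0}"
        unfolding V.subspace_def by (auto simp: pairing_add2 pairing_scale2 pairing_zero2)
    qed
    then have "\<forall>b\<in>hom N R'. pairing N x b = 0"
      using B(3) part1[OF p a(1)] unfolding a(2) W'_def by auto
    moreover have "x \<in> hom N (p + R)"
      unfolding a(2) Qmap_def using wedge_hom[OF qTr_hom[OF p] a(1)] .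
    moreover have "R' = N^2 - (p + R)" using RR by simp
    ultimately show "x = 0"
      using nondeg[of x N "p + R"] RR unfolding pairing_def by auto
  qed
  have inj: "inj_on L (V.span C)"
    using VP.linear_inj_on_iff_eq_0[OF Llin Wsub(1)] spanC kernel by auto
  have indLC: "V.independent (L ` C)"
    by (rule VP.linear_independent_injective_image[OF Llin C(2) inj])
  have cardLC: "card (L ` C) = card C"
    by (rule card_image, rule inj_on_subset[OF inj V.span_superset])
  have LCsub: "L ` C \<subseteq> V.span B"
  proof -
    have "L x \<in> V.span B" for x
      unfolding L_def by (rule V.span_sum, rule V.span_scale, rule V.span_base)
    then show ?thesis by auto
  qed
  have "card (L ` C) \<le> card B"
    using V.independent_span_bound[OF finB indLC LCsub] by simp
  then show ?thesis unfolding W_def[symmetric] W'_def[symmetric] using B(4) C(4) cardLC by simp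
qed

definition wv :: "nat \<Rightarrow> nat" where "wv t = (t + 1) div 2"
definition cE :: "nat \<Rightarrow> nat \<Rightarrow> nat \<times> nat" where "cE p u = (wv u, wv (Suc u mod p))"
definition rot :: "nat \<Rightarrow> nat \<Rightarrow> nat \<Rightarrow> nat" where
  "rot p s = (\<lambda>t. if t < p then wv ((t + s) mod p) else undefined)"

lemma Suc_mod_if: "u < p \<Longrightarrow> Suc u mod p = (if Suc u = p then 0 else Suc u)"
  by auto

lemma div2_close: "(a::nat) div 2 = b div 2 \<Longrightarrow> a = b \<or> a = b + 1 \<or> b = a + 1"
proof -
  assume h: "a div 2 = b div 2"
  have "a = 2 * (a div 2) + a mod 2" "b = 2 * (b div 2) + b mod 2" by simp_all
  moreover have "a mod 2 < 2" "b mod 2 < 2" by simp_all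
  ultimately show ?thesis using h by linarith
qed

lemma cE_inj:
  assumes "p = 2 * k + 1" "1 \<le> k" "u < p" "u' < p" "cE p u = cE p u'"
  shows "u = u'"
proof (rule ccontr)
  assume ne: "u \<noteq> u'"
  have A: "(u + 1) div 2 = (u' + 1) div 2"
   and B: "(Suc u mod p + 1) div 2 = (Suc u' mod p + 1) div 2"
    using assms(5) by (auto simp: cE_def wv_def)
  have key: False if lt: "v' = v + 1" "v < p" "v' < p" "(v + 1) div 2 = (v' + 1) div 2"
      "(Suc v mod p + 1) div 2 = (Suc v' mod p + 1) div 2" for v v'
  proof -
    have sv: "Suc v mod p = Suc v" using lt by simp
    have ov: "odd v" using lt(1,4) by presburger
    show False
    proof (cases "Suc v' = p")
      case True
      then have "(Suc v + 1) div 2 = 0" using lt(5) sv by simp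
      then show False by simp
    next
      case False
      then have "Suc v' mod p = Suc v'" using lt(3) by simp
      then have "(v + 2) div 2 = (v + 3) div 2" using lt(5) sv lt(1) by simp
      then show False using ov by presburger
    qed
  qed
  from div2_close[OF A] ne consider "u + 1 = u' + 1 + 1" | "u' + 1 = u + 1 + 1" by auto
  then show False
  proof cases
    case 1 show False by (rule key[where v=u' and v'=u, OF _ assms(4) assms(3) A[symmetric] B[symmetric]]) (use 1 in simp)
  next
    case 2 show False by (rule key[where v=u and v'=u', OF _ assms(3) assms(4) A B]) (use 2 in simp)
  qed
qed

lemma ar0: "((u'::nat) + 1) div 2 = 0 \<Longrightarrow> u' = 0" by presburger
lemma ar1: "odd (u::nat) \<Longrightarrow> (u' + 1) div 2 = (u + 2) div 2 \<Longrightarrow> u' \<noteq> u \<Longrightarrow> u' = u + 1"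
  by presburger
lemma ar2: "even (u::nat) \<Longrightarrow> (u'' + 2) div 2 = (u + 2) div 2 \<Longrightarrow> u'' \<noteq> u + 1 \<Longrightarrow> u'' = u"
  by presburger

lemma walk_char:
  assumes pk: "p = 2 * k + 1" "1 \<le> k"
    and i: "i \<in> PiE {0..<p} (\<lambda>_. {0..<N})" "distinct (walk p i)" "set (walk p i) = cE p ` {0..<p}"
  shows "\<exists>s<p. i = rot p s"
proof -
  define E where "E t = (i t, i (Suc t mod p))" for t
  have nth: "t < p \<Longrightarrow> walk p i ! t = E t" for t by (simp add: walk_def E_def)
  have len: "length (walk p i) = p" by (simp add: walk_def)
  have Einj: "t = t'" if "t < p" "t' < p" "E t = E t'" for t t'
  proof -
    have "walk p i ! t = walk p i ! t'" using nth that by simp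
    then show ?thesis using nth_eq_iff_index_eq[OF i(2)] len that by simp
  qed
  have "set (walk p i) = E ` {0..<p}" by (auto simp: walk_def E_def)
  then have Eset: "E ` {0..<p} = cE p ` {0..<p}" using i(3) by simp
  have Ein: "\<exists>u<p. E t = cE p u" if "t < p" for t
    using Eset that by (metis atLeastLessThan_iff image_iff zero_le)
  have Esurj: "\<exists>t<p. E t = cE p u" if "u < p" for u
    using Eset that by (metis atLeastLessThan_iff image_iff zero_le)
  have link: "fst (E (Suc t mod p)) = snd (E t)" for t by (simp add: E_def)
  have p3: "3 \<le> p" using pk by simp
  have succ: "E (Suc t mod p) = cE p (Suc u mod p)" if tu: "t < p" "u < p" "E t = cE p u" for t u
  proof -
    have tp: "Suc t mod p < p" using p3 by simp
    obtain u' where u': "u' < p" "E (Suc t mod p) = cE p u'" using Ein[OF tp] by blast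
    have tne: "Suc t mod p \<noteq> t" using tu(1) p3 Suc_mod_if[OF tu(1)] by auto
    have ne: "u' \<noteq> u" using Einj[OF tp tu(1)] tne u' tu(3) by auto
    have f: "wv u' = wv (Suc u mod p)" using link[of t] u' tu(3) by (simp add: cE_def)
    show ?thesis
    proof (cases "u = 2 * k")
      case True
      then have "Suc u mod p = 0" using pk by simp
      then have "(u' + 1) div 2 = 0" using f by (simp add: wv_def)
      then have "u' = 0" using ar0 by blast
      then show ?thesis using u' \<open>Suc u mod p = 0\<close> by simp
    next
      case False2: False
      show ?thesis
      proof (cases "odd u")
      case True
      have "Suc u mod p = Suc u" using False2 tu(2) pk by simp
      then have "(u' + 1) div 2 = (u + 2) div 2" using f by (simp add: wv_def)
      then have "u' = u + 1" using ar1[OF True] ne by blast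
      then show ?thesis using u' \<open>Suc u mod p = Suc u\<close> by simp
    next
      case False
      then have ev: "even u" "u < 2 * k" using tu(2) pk False2 by auto
      then have su: "Suc u < p" using pk by simp
      obtain m where m: "m < p" "E m = cE p (Suc u)" using Esurj[OF su] by blast
      define m' where "m' = (m + p - 1) mod p"
      have m'p: "m' < p" using p3 by (simp add: m'_def)
      have m'm: "Suc m' mod p = m"
      proof (cases "m = 0")
        case True then show ?thesis using p3 by (simp add: m'_def)
      next
        case False
        have e1: "m + p - 1 = (m - 1) + p" using False by simp
        have e2: "((m - 1) + p) mod p = m - 1" using m(1) by simp
        have "m' = m - 1" unfolding m'_def e1 e2 ..
        then show ?thesis using m(1) False by simp
      qed
      obtain u'' where u'': "u'' < p" "E m' = cE p u''" using Ein[OF m'p] by blast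
      have "m' \<noteq> m" using m'm m'p p3 Suc_mod_if[OF m'p] by (auto split: if_splits)
      then have "u'' \<noteq> Suc u" using Einj[OF m'p m(1)] u'' m by auto
      moreover have "wv (Suc u'' mod p) = wv (Suc u mod p)"
        using link[of m'] m'm m u'' su by (simp add: cE_def)
      ultimately have e2: "(((if Suc u'' = p then 0 else Suc u'') + 1) div 2) = (Suc u + 1) div 2"
        using Suc_mod_if[OF u''(1)] su by (simp add: wv_def)
      have "Suc u'' \<noteq> p"
      proof
        assume "Suc u'' = p"
        then have "(Suc u + 1) div 2 = 0" using e2 by simp
        then show False by simp
      qed
      then have "(u'' + 2) div 2 = (u + 2) div 2" using e2 by simp
      then have "u'' = u" using ar2[OF ev(1)] \<open>u'' \<noteq> Suc u\<close> by simp
      then have "m' = t" using Einj[OF m'p tu(1)] u'' tu(3) by simp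
      then have "Suc t mod p = m" using m'm by simp
      then show ?thesis using m su by simp
    qed
    qed
  qed
  have p0: "0 < p" using p3 by simp
  obtain s where s: "s < p" "E 0 = cE p s" using Ein[OF p0] by blast
  have all: "t < p \<Longrightarrow> E t = cE p ((t + s) mod p)" for t
  proof (induction t)
    case 0 then show ?case using s by simp
  next
    case (Suc t)
    then have "E (Suc t mod p) = cE p (Suc ((t + s) mod p) mod p)"
      using succ[of t "(t + s) mod p"] p0 by simp
    then show ?case using Suc.prems by (simp add: mod_Suc_eq)
  qed
  have "i = rot p s"
  proof (rule ext)
    fix t show "i t = rot p s t"
    proof (cases "t < p")
      case True then show ?thesis using all[OF True] by (simp add: E_def cE_def rot_def)
    next
      case False then show ?thesis using i(1) by (simp add: rot_def PiE_def extensional_def)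
    qed
  qed
  then show ?thesis using s by blast
qed

lemma mod_lt2: "x < 2 * p \<Longrightarrow> x mod p = (if x < p then x else x - (p::nat))"
proof (cases "x < p")
  case False
  assume "x < 2 * p"
  then have l: "x - p < p" using False by simp
  have e: "x = (x - p) + p" using False by simp
  have "x mod p = ((x - p) + p) mod p" using e by (rule arg_cong)
  also have "\<dots> = (x - p) mod p" by (rule mod_add_self2)
  also have "\<dots> = x - p" using l by (rule mod_less)
  finally show ?thesis using False by simp
qed simp

lemma mod_shift_inj:
  assumes a: "t < p" "t' < p" "(t + s) mod p = (t' + s) mod (p::nat)"
  shows "t = t'"
proof -
  have p0: "0 < p" using a by simp
  define m where "m = s mod p"
  have m: "m < p" using p0 by (simp add: m_def)
  have eq: "(t + m) mod p = (t' + m) mod p" using a(3) unfolding m_def by (simp add: mod_add_right_eq)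
  have l1: "t + m < 2 * p" and l2: "t' + m < 2 * p" using a m by linarith+
  show ?thesis
  proof (cases "t + m < p")
    case c1: True
    show ?thesis
    proof (cases "t' + m < p")
      case True then show ?thesis using eq mod_lt2[OF l1] mod_lt2[OF l2] c1 by simp
    next
      case False
      then have "t + m = t' + m - p" using eq mod_lt2[OF l1] mod_lt2[OF l2] c1 by simp
      then show ?thesis using a(2) False by linarith
    qed
  next
    case c1: False
    show ?thesis
    proof (cases "t' + m < p")
      case True
      then have "t + m - p = t' + m" using eq mod_lt2[OF l1] mod_lt2[OF l2] c1 by simp
      then show ?thesis using a(1) c1 by linarith
    next
      case False then have "t + m - p = t' + m - p" using eq mod_lt2[OF l1] mod_lt2[OF l2] c1 by simp
      then show ?thesis using False c1 by linarith
    qed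
  qed
qed

lemma rot_valid:
  assumes pk: "p = 2 * k + 1" "1 \<le> k" "k + 1 \<le> N" and s: "s < p"
  shows "rot p s \<in> PiE {0..<p} (\<lambda>_. {0..<N}) \<and> distinct (walk p (rot p s))
     \<and> set (walk p (rot p s)) = cE p ` {0..<p}"
proof -
  have p0: "0 < p" using pk by simp
  have w: "walk p (rot p s) = map (\<lambda>t. cE p ((t + s) mod p)) [0..<p]"
    unfolding walk_def
  proof (rule map_cong[OF refl])
    fix t assume "t \<in> set [0..<p]"
    then have t: "t < p" by simp
    have "rot p s (Suc t mod p) = wv ((Suc t mod p + s) mod p)" using p0 by (simp add: rot_def)
    also have "\<dots> = wv (Suc ((t + s) mod p) mod p)" by (simp add: mod_add_left_eq mod_Suc_eq)
    finally show "(rot p s t, rot p s (Suc t mod p)) = cE p ((t + s) mod p)"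
      using t by (simp add: rot_def cE_def)
  qed
  have inj: "inj_on (\<lambda>t. cE p ((t + s) mod p)) {0..<p}"
  proof (rule inj_onI)
    fix x y assume xy: "x \<in> {0..<p}" "y \<in> {0..<p}" "cE p ((x + s) mod p) = cE p ((y + s) mod p)"
    have "(x + s) mod p = (y + s) mod p"
      by (rule cE_inj[OF pk(1,2) _ _ xy(3)]) (use p0 in simp_all)
    then show "x = y" using mod_shift_inj xy by auto
  qed
  have im: "(\<lambda>t. (t + s) mod p) ` {0..<p} = {0..<p}"
    by (rule endo_inj_surj) (auto simp: p0 inj_on_def intro: mod_shift_inj)
  have "set (walk p (rot p s)) = cE p ` ((\<lambda>t. (t + s) mod p) ` {0..<p})"
    unfolding w by (auto simp: image_image)
  then have "set (walk p (rot p s)) = cE p ` {0..<p}" using im by simp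
  moreover have "distinct (walk p (rot p s))" unfolding w using inj by (simp add: distinct_map)
  moreover have "rot p s \<in> PiE {0..<p} (\<lambda>_. {0..<N})"
  proof -
    have "wv x < N" if "x < p" for x using that pk by (simp add: wv_def)
    then show ?thesis using p0 by (auto simp: rot_def PiE_def extensional_def)
  qed
  ultimately show ?thesis by simp
qed

lemma odd_pow_m1: "odd ((-1::int) ^ n)" by simp

lemma odd_sum_int: "finite A \<Longrightarrow> even (\<Sum>x\<in>A. ((-1::int) ^ f x)) \<longleftrightarrow> even (card A)"
proof (induction A rule: finite_induct)
  case (insert x F)
  have "(\<Sum>y\<in>insert x F. ((-1::int) ^ f y)) = (-1) ^ f x + (\<Sum>y\<in>F. ((-1::int) ^ f y))"
    using insert by simp
  moreover have "card (insert x F) = Suc (card F)" using insert by simp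
  ultimately show ?case using insert.IH odd_pow_m1[of "f x"] by (simp only: even_add even_Suc) simp
qed simp

lemma odd_sum_nz:
  assumes "finite A" "odd (card A)"
  shows "(\<Sum>x\<in>A. ((-1::complex) ^ f x)) \<noteq> 0"
proof -
  have "(\<Sum>x\<in>A. ((-1::complex) ^ f x)) = of_int (\<Sum>x\<in>A. ((-1::int) ^ f x))" by simp
  moreover have "(\<Sum>x\<in>A. ((-1::int) ^ f x)) \<noteq> 0" using odd_sum_int[OF assms(1), of f] assms(2) by auto
  ultimately show ?thesis by (metis of_int_eq_0_iff)
qed

lemma qTr_nonzero':
  assumes pk: "p = 2 * k + 1" "1 \<le> k" "k + 1 \<le> N"
  shows "qTr N p \<noteq> 0"
proof -
  let ?S0 = "cE p ` {0..<p}"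
  let ?P = "\<lambda>i. distinct (walk p i) \<and> set (walk p i) = ?S0"
  have fin: "finite (PiE {0..<p} (\<lambda>_. {0..<N}))" by (rule finite_PiE) simp_all
  have filt: "{i \<in> PiE {0..<p} (\<lambda>_. {0..<N}). ?P i} = rot p ` {0..<p}"
  proof
    show "{i \<in> PiE {0..<p} (\<lambda>_. {0..<N}). ?P i} \<subseteq> rot p ` {0..<p}"
    proof
      fix i assume "i \<in> {i \<in> PiE {0..<p} (\<lambda>_. {0..<N}). ?P i}"
      then have h: "i \<in> PiE {0..<p} (\<lambda>_. {0..<N})" "distinct (walk p i)" "set (walk p i) = ?S0"
        by simp_all
      obtain s where "s < p" "i = rot p s" using walk_char[OF pk(1,2) h] by blast
      then show "i \<in> rot p ` {0..<p}" by simp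
    qed
    show "rot p ` {0..<p} \<subseteq> {i \<in> PiE {0..<p} (\<lambda>_. {0..<N}). ?P i}"
    proof
      fix i assume "i \<in> rot p ` {0..<p}"
      then obtain s where s: "s < p" "i = rot p s" by auto
      show "i \<in> {i \<in> PiE {0..<p} (\<lambda>_. {0..<N}). ?P i}"
        using rot_valid[OF pk s(1)] unfolding s(2) by (simp only: mem_Collect_eq)
    qed
  qed
  have w0: "walk p (rot p s) ! 0 = cE p s" if "s < p" for s
  proof -
    have p1: "1 < p" using pk by simp
    have "walk p (rot p s) ! 0 = (rot p s 0, rot p s (Suc 0 mod p))" using p1 by (simp add: walk_def)
    moreover have "rot p s 0 = wv s" using that p1 by (simp add: rot_def)
    moreover have "Suc 0 mod p = 1" using p1 by simp
    moreover have "rot p s 1 = wv (Suc s mod p)" using p1 by (simp add: rot_def)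
    ultimately show ?thesis by (simp add: cE_def)
  qed
  have injr: "inj_on (rot p) {0..<p}"
  proof (rule inj_onI)
    fix s s' assume ss: "s \<in> {0..<p}" "s' \<in> {0..<p}" "rot p s = rot p s'"
    then have "cE p s = cE p s'" using w0[of s] w0[of s'] by simp
    then show "s = s'" using cE_inj[OF pk(1,2)] ss by simp
  qed
  have "qTr N p ?S0 = (\<Sum>i\<in>{i \<in> PiE {0..<p} (\<lambda>_. {0..<N}). ?P i}. (-1) ^ invs (walk p i))"
    unfolding qTr_eq by (rule sum.inter_filter[OF fin, symmetric])
  also have "\<dots> = (\<Sum>s\<in>{0..<p}. (-1) ^ invs (walk p (rot p s)))"
    unfolding filt by (rule sum.reindex[OF injr, unfolded comp_def])
  finally have e: "qTr N p ?S0 = (\<Sum>s\<in>{0..<p}. (-1) ^ invs (walk p (rot p s)))" .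
  have "odd (card {0..<p})" using pk by simp
  then have "qTr N p ?S0 \<noteq> 0" unfolding e by (intro odd_sum_nz) simp_all
  then show ?thesis by (intro notI) simp
qed

lemma qTr_nonzero:
  assumes "N \<ge> 2" "odd p" "3 \<le> p" "p \<le> 2 * N - 1"
  shows "qTr N p \<noteq> 0"
proof -
  obtain k where k: "p = 2 * k + 1" using assms(2) oddE by blast
  have "1 \<le> k" "k + 1 \<le> N" using assms k by linarith+
  then show ?thesis using qTr_nonzero'[OF k] by blast
qed

lemma wsign_empty: "wsign S {} = 1" by (simp add: wsign_def)

lemma wedge_one: "a \<in> hom N r \<Longrightarrow> wedge a ext_one = a"
proof (rule ext)
  fix U assume a: "a \<in> hom N r"
  show "wedge a ext_one U = a U"
  proof (cases "finite U")
    case True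
    have "wedge a ext_one U = (\<Sum>S\<in>Pow U. if S = U then a U else 0)"
      unfolding wedge_fin[OF True]
    proof (rule sum.cong[OF refl])
      fix S assume "S \<in> Pow U"
      then have "(U - S = {}) \<longleftrightarrow> S = U" by auto
      then show "wsign S (U - S) * a S * ext_one (U - S) = (if S = U then a U else 0)"
        by (auto simp: ext_one_def wsign_empty)
    qed
    also have "\<dots> = a U" by (simp add: sum.delta' True)
    finally show ?thesis .
  next
    case False
    then have "a U = 0" using homD[OF a, of U] finite_subset[OF _ finite_gens] by blast
    then show ?thesis using False by (simp add: wedge_inf)
  qed
qed

lemma rk0_pos:
  assumes "N \<ge> 2" "odd p" "3 \<le> p" "p \<le> 2 * N - 1"
  shows "rk N p 0 \<noteq> 0"
proof -
  have p: "0 < p" using assms by simp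
  have pN: "int p \<le> int (N^2)"
  proof -
    have "2 * N \<le> N * N" using mult_le_mono1[OF assms(1), of N] .
    then have "2 * N - 1 \<le> N^2" unfolding power2_eq_square by linarith
    then show ?thesis using assms by simp
  qed
  define W where "W = Qmap N p ` hom N 0"
  have one: "ext_one \<in> hom N 0" by (auto simp: hom_def ext_one_def)
  have qW: "qTr N p \<in> W" unfolding W_def Qmap_def
    using wedge_one[OF qTr_hom[OF p]] one by (intro image_eqI[where x = ext_one]) auto
  have Whom: "W \<subseteq> hom N (p + 0)" unfolding W_def Qmap_def using wedge_hom qTr_hom[OF p] by blast
  obtain B where B: "B \<subseteq> W" "V.independent B" "W \<subseteq> V.span B" "card B = V.dim W"
    by (rule V.basis_exists)
  have "B \<subseteq> V.span (mono_e ` Pow (gens N))" using B(1) Whom hom_span by blast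
  then have finB: "finite B"
    using V.independent_span_bound[OF _ B(2), of "mono_e ` Pow (gens N)"] by simp
  show ?thesis
  proof
    assume "rk N p 0 = 0"
    then have "V.dim W = 0" unfolding rk_def W_def using pN by simp
    then have "B = {}" using B(4) finB by simp
    then have "qTr N p = 0" using B(3) qW by auto
    then show False using qTr_nonzero[OF assms] by simp
  qed
qed

lemma rk_sym:
  assumes p: "0 < p"
  shows "rk N p R = rk N p (int (N^2) - int p - R)"
proof (cases "R < 0 \<or> R > int (N^2) - int p")
  case True then show ?thesis by (auto simp: rk_def)
next
  case False
  define R' where "R' = int (N^2) - int p - R"
  have "nat R + p + nat R' = N^2" using False unfolding R'_def by linarith
  then have "V.dim (Qmap N p ` hom N (nat R)) = V.dim (Qmap N p ` hom N (nat R'))"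
    using rank_le[OF p, where R="nat R" and N=N and R'="nat R'"] rank_le[OF p, where R="nat R'" and N=N and R'="nat R"]
    by (simp add: add.commute add.left_commute)
  then show ?thesis using False unfolding rk_def R'_def[symmetric]
    by (auto simp: R'_def)
qed

theorem mainTheorem2:
  fixes N p :: nat
  assumes "N \<ge> 2" and "odd p" and "3 \<le> p" and "p \<le> 2 * N - 1"
  shows "(\<forall>R a b. R + p \<le> N^2 \<longrightarrow> a \<in> hom N R \<longrightarrow> b \<in> hom N (N^2 - p - R) \<longrightarrow>
            pairing N (Qmap N p a) b = (-1) ^ (p * R) * pairing N a (Qmap N p b))
       \<and> (\<forall>R::int. rk N p R = rk N p (int (N^2) - int p - R))
       \<and> reflect_poly (rank_poly N p) = rank_poly N p
       \<and> degree (rank_poly N p) = N^2 - p"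
proof -
  have p: "0 < p" using assms by simp
  have pN: "p \<le> N^2"
  proof -
    have "2 * N \<le> N * N" using mult_le_mono1[OF assms(1), of N] .
    then have "2 * N - 1 \<le> N^2" unfolding power2_eq_square by linarith
    then show ?thesis using assms by simp
  qed
  define D where "D = N^2 - p"
  have cf: "coeff (rank_poly N p) n = (if n \<le> D then int (rk N p (int n)) else 0)" for n
    unfolding rank_poly_def D_def[symmetric] coeff_sum coeff_monom
    by (cases "n \<le> D") (auto simp: sum.delta)
  have sym: "rk N p (int n) = rk N p (int (D - n))" if "n \<le> D" for n
    using rk_sym[OF p, where R="int n" and N=N] that pN unfolding D_def by (simp add: of_nat_diff algebra_simps)
  have "rk N p (int D) \<noteq> 0" using sym[of D] rk0_pos[OF assms] by simp
  then have deg: "degree (rank_poly N p) = D"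
    by (intro antisym degree_le le_degree) (auto simp: cf)
  have refl: "reflect_poly (rank_poly N p) = rank_poly N p"
    by (rule poly_eqI) (auto simp: coeff_reflect_poly deg cf sym)
  show ?thesis using part1[OF p] rk_sym[OF p] refl deg D_def by blast
qed

end
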